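(* Let $p\in[0,1)$, let $f:2^{\mathcal{N}}\to\mathbb{R}_{\ge0}$ be a non-negative submodular function with multilinear extension $F$, and let $\mathcal{P}\subseteq[0,1]^{\mathcal{N}}$ be a downward-closed solvable polytope such that $z_i\le p$ for all $\bm{z}\in\mathcal{P}$ and $i\in\mathcal{N}$. Let $\bm{x}(\cdot)$ be the trajectory of the Measured Continuous Greedy algorithm on $F$ and $\mathcal{P}$. Then for every $b\in[0,1]$, $\bm{x}(b)\in b\cdot\mathcal{P}$ and \[F(\bm{x}(b))\ge\begin{cases} b\,e^{-b}\,\max_{\bm{z}\in\mathcal{P}} f^+(\bm{z}), & 0\le b\le \ln\frac{1}{1-p},\\[2pt] \big(1-p-e^{-b}(1+\ln(1-p))\big)\max_{\bm{z}\in\mathcal{P}} f^+(\bm{z}), & \ln\frac{1}{1-p}\le b\le 1.\end{cases}\]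
   Context: Submodular: $f(A)+f(B)\ge f(A\cup B)+f(A\cap B)$; non-negative: $f\ge0$, $f(\emptyset)=0$. Multilinear extension $F(\bm{x})=\sum_{S} f(S)\prod_{i\in S}x_i\prod_{i\notin S}(1-x_i)$; concave closure $f^+(\bm{x})=\max\{\sum_S a_Sf(S): a_S\ge0,\sum_Sa_S=1,\sum_Sa_S\mathbf{1}_S=\bm{x}\}$. A polytope $\mathcal{P}\subseteq[0,1]^{\mathcal{N}}$ is downward-closed if $\bm{0}\le\bm{y}\le\bm{z}\in\mathcal{P}$ implies $\bm{y}\in\mathcal{P}$, and solvable if linear functions can be maximized over it in polynomial time. The Measured Continuous Greedy algorithm (continuous-time version) produces $\bm{x}:[0,1]\to[0,1]^{\mathcal{N}}$ with $\bm{x}(0)=\bm{0}$ and $\frac{d}{dt}\bm{x}(t)=\bm{v}(t)\circ(\bm{1}-\bm{x}(t))$, where $\circ$ is the coordinatewise product and $\bm{v}(t)\in\arg\max_{\bm{v}\in\mathcal{P}}\langle \bm{v}\circ(\bm{1}-\bm{x}(t)),\nabla F(\bm{x}(t))\rangle$; its output at time $b$ is $\bm{x}(b)$. $b\cdot\mathcal{P}=\{b\bm{z}:\bm{z}\in\mathcal{P}\}$. *)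

theory Defs
  imports "HOL-Analysis.Analysis"
begin

text \<open>Ground set N is the finite type 'n (N = UNIV); vectors in [0,1]^N are real ^ 'n.\<close>

definition nonneg_submodular :: "('n::finite set \<Rightarrow> real) \<Rightarrow> bool" where
  "nonneg_submodular f \<longleftrightarrow>
     (\<forall>A B. f A + f B \<ge> f (A \<union> B) + f (A \<inter> B)) \<and> (\<forall>S. f S \<ge> 0) \<and> f {} = 0"

definition multilinear_ext :: "('n::finite set \<Rightarrow> real) \<Rightarrow> real ^ 'n \<Rightarrow> real" where
  "multilinear_ext f x =
     (\<Sum>S\<in>(UNIV :: 'n set set). f S * (\<Prod>i\<in>S. x $ i) * (\<Prod>i\<in>- S. 1 - x $ i))"

definition indicator_vec :: "'n::finite set \<Rightarrow> real ^ 'n" where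
  "indicator_vec S = (\<chi> i. if i \<in> S then 1 else 0)"

definition concave_closure :: "('n::finite set \<Rightarrow> real) \<Rightarrow> real ^ 'n \<Rightarrow> real" where
  "concave_closure f z = Sup {(\<Sum>S\<in>UNIV. a S * f S) | a.
      (\<forall>S. a S \<ge> 0) \<and> (\<Sum>S\<in>UNIV. a S) = 1 \<and> (\<Sum>S\<in>UNIV. a S *\<^sub>R indicator_vec S) = z}"

definition grad :: "(real ^ 'n \<Rightarrow> real) \<Rightarrow> real ^ 'n \<Rightarrow> real ^ 'n" where
  "grad F x = (\<chi> i. deriv (\<lambda>s. F (x + s *\<^sub>R axis i 1)) 0)"

definition hadamard :: "real ^ 'n \<Rightarrow> real ^ 'n \<Rightarrow> real ^ 'n" (infixl "\<circ>\<^sub>v" 70) where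
  "hadamard u w = (\<chi> i. u $ i * w $ i)"

definition down_closed :: "(real ^ 'n) set \<Rightarrow> bool" where
  "down_closed P \<longleftrightarrow> (\<forall>y z. z \<in> P \<and> 0 \<le> y \<and> y \<le> z \<longrightarrow> y \<in> P)"

definition in_unit_cube :: "(real ^ 'n) set \<Rightarrow> bool" where
  "in_unit_cube P \<longleftrightarrow> (\<forall>z\<in>P. \<forall>i. 0 \<le> z $ i \<and> z $ i \<le> 1)"

definition mcg_trajectory ::
  "(real ^ 'n \<Rightarrow> real) \<Rightarrow> (real ^ 'n) set \<Rightarrow> (real \<Rightarrow> real ^ 'n) \<Rightarrow> (real \<Rightarrow> real ^ 'n) \<Rightarrow> bool" where
  "mcg_trajectory F P x v \<longleftrightarrow>
     x 0 = 0 \<and>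
     (\<forall>t\<in>{0..1}.
        v t \<in> P \<and>
        (\<forall>w\<in>P. (w \<circ>\<^sub>v (1 - x t)) \<bullet> grad F (x t) \<le> (v t \<circ>\<^sub>v (1 - x t)) \<bullet> grad F (x t)) \<and>
        (x has_vector_derivative (v t \<circ>\<^sub>v (1 - x t))) (at t within {0..1}))"

end

theory Submission
  imports Defs
begin

definition cube :: "real ^ 'n \<Rightarrow> bool" where
  "cube y \<longleftrightarrow> (\<forall>i. 0 \<le> y $ i \<and> y $ i \<le> 1)"

definition wt :: "real ^ 'n::finite \<Rightarrow> 'n set \<Rightarrow> real" where
  "wt y S = (\<Prod>i\<in>S. y $ i) * (\<Prod>i\<in>- S. 1 - y $ i)"

definition EE :: "real ^ 'n::finite \<Rightarrow> ('n set \<Rightarrow> real) \<Rightarrow> real" where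
  "EE y g = (\<Sum>S\<in>UNIV. g S * wt y S)"

definition rr :: "real ^ 'n::finite \<Rightarrow> 'n \<Rightarrow> 'n set \<Rightarrow> real" where
  "rr y j S = (\<Prod>i\<in>S. y $ i) * (\<Prod>i\<in>- S - {j}. 1 - y $ i)"

definition upd :: "real ^ 'n \<Rightarrow> 'n \<Rightarrow> real \<Rightarrow> real ^ 'n" where
  "upd y j c = (\<chi> i. if i = j then c else y $ i)"

lemma upd_nth [simp]: "upd y j c $ i = (if i = j then c else y $ i)"
  by (simp add: upd_def)

lemma upd_upd [simp]: "upd (upd y j c) j d = upd y j d"
  by (simp add: upd_def vec_eq_iff)

lemma F_EE: "multilinear_ext f y = EE y f"
  by (simp add: multilinear_ext_def EE_def wt_def mult.assoc)

lemma wt_split1: "j \<notin> S \<Longrightarrow> wt y S = (1 - y $ j) * rr y j S"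
proof -
  assume j: "j \<notin> S"
  have "- S = insert j (- S - {j})" using j by auto
  then have "(\<Prod>i\<in>- S. 1 - y $ i) = (1 - y $ j) * (\<Prod>i\<in>- S - {j}. 1 - y $ i)"
    by (metis (no_types, lifting) Diff_iff finite insertI1 prod.insert)
  then show ?thesis by (simp add: wt_def rr_def)
qed

lemma wt_split2: "j \<notin> S \<Longrightarrow> wt y (insert j S) = y $ j * rr y j S"
proof -
  assume j: "j \<notin> S"
  have "- insert j S = - S - {j}" by auto
  then show ?thesis using j by (simp add: wt_def rr_def)
qed

lemma rr_upd: "j \<notin> S \<Longrightarrow> rr (upd y j c) j S = rr y j S"
  unfolding rr_def by (intro arg_cong2[where f="(*)"] prod.cong) auto

lemma sum_split:
  fixes \<phi> :: "'n::finite set \<Rightarrow> real"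
  shows "(\<Sum>S\<in>UNIV. \<phi> S) = (\<Sum>S\<in>{S. j \<notin> S}. \<phi> S + \<phi> (insert j S))"
proof -
  have mem: "S \<in> {S. j \<notin> S} \<union> insert j ` {S. j \<notin> S}" for S :: "'n set"
  proof (cases "j \<in> S")
    case True
    then have "S = insert j (S - {j})" by auto
    then show ?thesis by blast
  qed auto
  have U: "(UNIV :: 'n set set) = {S. j \<notin> S} \<union> insert j ` {S. j \<notin> S}"
    using mem by blast
  have inj: "inj_on (insert j) {S. j \<notin> S}"
    by (auto simp: inj_on_def insert_ident)
  have "(\<Sum>S\<in>UNIV. \<phi> S) = (\<Sum>S\<in>{S. j \<notin> S}. \<phi> S) + (\<Sum>S\<in>insert j ` {S. j \<notin> S}. \<phi> S)"
    by (subst U, rule sum.union_disjoint) auto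
  also have "(\<Sum>S\<in>insert j ` {S. j \<notin> S}. \<phi> S) = (\<Sum>S\<in>{S. j \<notin> S}. \<phi> (insert j S))"
    by (rule sum.reindex[OF inj, unfolded comp_def])
  finally show ?thesis by (simp add: sum.distrib)
qed

lemma EE_split:
  "EE y g = (\<Sum>S\<in>{S. j \<notin> S}. ((1 - y $ j) * g S + y $ j * g (insert j S)) * rr y j S)"
  unfolding EE_def
  by (subst sum_split[of _ j], rule sum.cong) (auto simp: wt_split1 wt_split2 algebra_simps)

lemma EE_aff: "EE y g = y $ j * EE (upd y j 1) g + (1 - y $ j) * EE (upd y j 0) g"
  apply (subst (1 2 3) EE_split[of _ _ j])
  apply (simp add: rr_upd sum_distrib_left)
  apply (subst sum.distrib[symmetric])
  by (rule sum.cong) (auto simp: rr_upd algebra_simps)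

lemma EE_ins: "EE (upd y j 1) g = EE y (\<lambda>S. g (insert j S))"
  apply (subst (1 2) EE_split[of _ _ j])
  by (rule sum.cong) (auto simp: rr_upd algebra_simps)

lemma EE_del: "EE (upd y j 0) g = EE y (\<lambda>S. g (S - {j}))"
  apply (subst (1 2) EE_split[of _ _ j])
  by (rule sum.cong) (auto simp: rr_upd algebra_simps)

lemma wt_nonneg: "cube y \<Longrightarrow> wt y S \<ge> 0"
  unfolding wt_def cube_def by (intro mult_nonneg_nonneg prod_nonneg) auto

lemma EE_mono_fun: "cube y \<Longrightarrow> (\<And>S. g S \<le> h S) \<Longrightarrow> EE y g \<le> EE y h"
  unfolding EE_def by (intro sum_mono mult_right_mono wt_nonneg) auto

lemma EE_diff: "EE y (\<lambda>S. g S - h S) = EE y g - EE y h"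
  unfolding EE_def by (simp add: sum_subtractf left_diff_distrib)

lemma cube_upd: "cube y \<Longrightarrow> 0 \<le> c \<Longrightarrow> c \<le> 1 \<Longrightarrow> cube (upd y j c)"
  by (simp add: cube_def)

lemma EE_step:
  assumes "cube z" "z $ k \<le> t" "t \<le> 1" and anti: "\<And>S T. S \<subseteq> T \<Longrightarrow> g T \<le> g S"
  shows "EE (upd z k t) g \<le> EE z g"
proof -
  define A where "A = EE (upd z k 1) g"
  define B where "B = EE (upd z k 0) g"
  have 1: "EE (upd z k t) g = t * A + (1 - t) * B"
    using EE_aff[of "upd z k t" g k] by (simp add: A_def B_def)
  have 2: "EE z g = z $ k * A + (1 - z $ k) * B"
    using EE_aff[of z g k] by (simp add: A_def B_def)
  have "A - B = EE z (\<lambda>S. g (insert k S) - g (S - {k}))"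
    by (simp add: A_def B_def EE_ins EE_del EE_diff)
  also have "\<dots> \<le> EE z (\<lambda>S. 0)"
    using assms(1) by (rule EE_mono_fun) (simp add: anti subset_insertI2)
  also have "\<dots> = 0" by (simp add: EE_def)
  finally have "A - B \<le> 0" .
  then have "(t - z $ k) * (A - B) \<le> 0"
    using assms(2) by (simp add: mult_nonneg_nonpos)
  then show ?thesis using 1 2 by (simp add: algebra_simps)
qed

lemma EE_antimono:
  assumes "cube y" "cube y'" "y \<le> y'" and anti: "\<And>S T. S \<subseteq> T \<Longrightarrow> g T \<le> g S"
  shows "EE y' g \<le> EE y g"
proof -
  define mix where "mix K = (\<chi> i. if i \<in> K then y' $ i else y $ i)" for K
  have cm: "cube (mix K)" for K
    using assms(1,2) by (auto simp: cube_def mix_def)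
  have "finite K \<Longrightarrow> EE (mix K) g \<le> EE y g" for K
  proof (induction K rule: finite_induct)
    case empty
    have "mix {} = y" by (simp add: mix_def vec_eq_iff)
    then show ?case by simp
  next
    case (insert k K)
    have e: "mix (insert k K) = upd (mix K) k (y' $ k)"
      by (simp add: mix_def vec_eq_iff)
    have "EE (upd (mix K) k (y' $ k)) g \<le> EE (mix K) g"
      using cm insert.hyps assms(2,3) anti
      by (intro EE_step) (auto simp: mix_def cube_def less_eq_vec_def)
    then show ?case using insert.IH e by simp
  qed
  moreover have "mix UNIV = y'" by (simp add: mix_def vec_eq_iff)
  ultimately show ?thesis by (metis finite)
qed

lemma upd_shift: "upd (y + s *\<^sub>R axis j 1) j c = upd y j c"
  by (simp add: vec_eq_iff axis_def)

lemma grad_eq: "grad (multilinear_ext f) y $ j = EE (upd y j 1) f - EE (upd y j 0) f"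
proof -
  define A where "A = EE (upd y j 1) f"
  define B where "B = EE (upd y j 0) f"
  have e: "(\<lambda>s. multilinear_ext f (y + s *\<^sub>R axis j 1)) = (\<lambda>s. (y $ j + s) * A + (1 - (y $ j + s)) * B)"
  proof
    fix s
    show "multilinear_ext f (y + s *\<^sub>R axis j 1) = (y $ j + s) * A + (1 - (y $ j + s)) * B"
      using EE_aff[of "y + s *\<^sub>R axis j 1" f j, unfolded upd_shift]
      by (simp add: F_EE A_def B_def axis_def)
  qed
  have "((\<lambda>s. (y $ j + s) * A + (1 - (y $ j + s)) * B) has_real_derivative (A - B)) (at 0)"
    by (auto intro!: derivative_eq_intros)
  then have "deriv (\<lambda>s. multilinear_ext f (y + s *\<^sub>R axis j 1)) 0 = A - B"
    unfolding e by (rule DERIV_imp_deriv)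
  then show ?thesis by (simp add: grad_def A_def B_def)
qed

lemma F_differentiable:
  fixes y :: "real ^ 'n::finite"
  shows "multilinear_ext f differentiable (at y)"
proof -
  have nth: "((\<lambda>y::real^'n. y $ i) has_derivative (\<lambda>h. h $ i)) (at y)" for i
    by (rule bounded_linear_imp_has_derivative[OF bounded_linear_vec_nth])
  have d1: "(\<lambda>y::real^'n. \<Prod>i\<in>S. y $ i) differentiable (at y)" for S
    unfolding differentiable_def by (rule exI, rule has_derivative_prod, rule nth)
  have d2: "(\<lambda>y::real^'n. \<Prod>i\<in>S. 1 - y $ i) differentiable (at y)" for S
    unfolding differentiable_def
    by (rule exI, rule has_derivative_prod, rule has_derivative_diff, rule has_derivative_const, rule nth)
  show ?thesis
    unfolding multilinear_ext_def
    by (rule differentiable_sum) (auto intro!: differentiable_mult d1 d2)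
qed

lemma F_has_derivative:
  fixes y :: "real ^ 'n::finite"
  shows "(multilinear_ext f has_derivative (\<lambda>h. h \<bullet> grad (multilinear_ext f) y)) (at y)"
proof -
  let ?F = "multilinear_ext f"
  define D where "D = frechet_derivative ?F (at y)"
  have FD: "(?F has_derivative D) (at y)"
    unfolding D_def using F_differentiable frechet_derivative_works by blast
  have lin: "linear D" using has_derivative_linear[OF FD] .
  have De: "D (axis j 1) = grad ?F y $ j" for j
  proof -
    let ?e = "axis j 1 :: real^'n"
    have p: "((\<lambda>s::real. y + s *\<^sub>R ?e) has_derivative (\<lambda>s. s *\<^sub>R ?e)) (at 0)"
      by (auto intro!: derivative_eq_intros)
    have FD0: "(?F has_derivative D) (at (y + (0::real) *\<^sub>R ?e))" using FD by simp
    have "((\<lambda>s. ?F (y + s *\<^sub>R ?e)) has_derivative (\<lambda>s. D (s *\<^sub>R ?e))) (at 0)"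
      by (rule has_derivative_compose[OF p FD0])
    moreover have "(\<lambda>s. D (s *\<^sub>R ?e)) = (\<lambda>s. D ?e * s)"
      using linear_scale[OF lin] by (auto simp: mult.commute)
    ultimately have "((\<lambda>s. ?F (y + s *\<^sub>R ?e)) has_real_derivative D ?e) (at 0)"
      by (simp add: has_field_derivative_def)
    then have "deriv (\<lambda>s. ?F (y + s *\<^sub>R ?e)) 0 = D ?e" by (rule DERIV_imp_deriv)
    then show ?thesis by (simp add: grad_def)
  qed
  have "D h = h \<bullet> grad ?F y" for h
  proof -
    have "h = (\<Sum>j\<in>UNIV. h $ j *\<^sub>R axis j 1)"
      using basis_expansion[of h] by (simp add: scalar_mult_eq_scaleR)
    then have "D h = D (\<Sum>j\<in>UNIV. h $ j *\<^sub>R axis j 1)" by simp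
    also have "\<dots> = (\<Sum>j\<in>UNIV. h $ j * D (axis j 1))"
      by (simp add: linear_sum[OF lin] linear_scale[OF lin])
    also have "\<dots> = h \<bullet> grad ?F y"
      by (simp add: De inner_vec_def)
    finally show ?thesis .
  qed
  then have "D = (\<lambda>h. h \<bullet> grad ?F y)" by auto
  then show ?thesis using FD by simp
qed

lemma grad_antimono:
  assumes sub: "nonneg_submodular f" and "cube y" "cube y'" "y \<le> y'"
  shows "grad (multilinear_ext f) y' $ j \<le> grad (multilinear_ext f) y $ j"
proof -
  have g: "grad (multilinear_ext f) z $ j = EE z (\<lambda>S. f (insert j S) - f (S - {j}))" for z
    by (simp add: grad_eq EE_ins EE_del EE_diff)
  have anti: "f (insert j T) - f (T - {j}) \<le> f (insert j S) - f (S - {j})" if "S \<subseteq> T" for S T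
  proof -
    have "f (insert j S) + f (T - {j}) \<ge> f (insert j S \<union> (T - {j})) + f (insert j S \<inter> (T - {j}))"
      using sub unfolding nonneg_submodular_def by blast
    moreover have "insert j S \<union> (T - {j}) = insert j T" using that by auto
    moreover have "insert j S \<inter> (T - {j}) = S - {j}" using that by auto
    ultimately show ?thesis by simp
  qed
  show ?thesis unfolding g by (rule EE_antimono[OF assms(2-4)]) (rule anti)
qed

lemma inner_mono_nonneg:
  fixes d a b :: "real ^ 'n"
  assumes "\<And>i. 0 \<le> d $ i" "\<And>i. a $ i \<le> b $ i"
  shows "d \<bullet> a \<le> d \<bullet> b"
  unfolding inner_vec_def using assms by (auto intro!: sum_mono mult_left_mono)

lemma F_segment:
  assumes sub: "nonneg_submodular f" and "cube y" "cube y'" "y \<le> y'"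
  shows "multilinear_ext f y' - multilinear_ext f y \<le> (y' - y) \<bullet> grad (multilinear_ext f) y"
    and "(y' - y) \<bullet> grad (multilinear_ext f) y' \<le> multilinear_ext f y' - multilinear_ext f y"
proof -
  let ?F = "multilinear_ext f"
  define d where "d = y' - y"
  have dnn: "0 \<le> d $ i" for i using assms(4) by (simp add: d_def less_eq_vec_def)
  have der: "((\<lambda>s. ?F (y + s *\<^sub>R d)) has_derivative (\<lambda>h. (h *\<^sub>R d) \<bullet> grad ?F (y + s *\<^sub>R d))) (at s within {0..1})"
    for s :: real
  proof -
    have p: "((\<lambda>s::real. y + s *\<^sub>R d) has_derivative (\<lambda>h. h *\<^sub>R d)) (at s within {0..1})"
      by (auto intro!: derivative_eq_intros)
    show ?thesis by (rule has_derivative_compose[OF p F_has_derivative])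
  qed
  obtain \<xi> where xi: "\<xi> \<in> {0..1}" and eq: "?F (y + 1 *\<^sub>R d) - ?F (y + 0 *\<^sub>R d) = ((1 - 0) *\<^sub>R d) \<bullet> grad ?F (y + \<xi> *\<^sub>R d)"
    using mvt_very_simple[of 0 1 "\<lambda>s. ?F (y + s *\<^sub>R d)", OF _ der] by auto
  define z where "z = y + \<xi> *\<^sub>R d"
  have eq': "?F y' - ?F y = d \<bullet> grad ?F z" using eq by (simp add: d_def z_def)
  have yz: "y \<le> z" using xi dnn by (simp add: z_def less_eq_vec_def)
  have zy: "z \<le> y'"
  proof -
    have "y $ i + \<xi> * d $ i \<le> y $ i + d $ i" for i using xi dnn[of i] by (simp add: mult_left_le_one_le)
    then show ?thesis by (simp add: z_def less_eq_vec_def d_def)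
  qed
  have cz: "cube z" using yz zy assms(2,3) unfolding cube_def less_eq_vec_def by (meson order_trans)
  have "d \<bullet> grad ?F z \<le> d \<bullet> grad ?F y"
    by (rule inner_mono_nonneg[OF dnn grad_antimono[OF sub assms(2) cz yz]])
  then show "?F y' - ?F y \<le> (y' - y) \<bullet> grad ?F y" using eq' by (simp add: d_def)
  have "d \<bullet> grad ?F y' \<le> d \<bullet> grad ?F z"
    by (rule inner_mono_nonneg[OF dnn grad_antimono[OF sub cz assms(3) zy]])
  then show "(y' - y) \<bullet> grad ?F y' \<le> ?F y' - ?F y" using eq' by (simp add: d_def)
qed

lemma F_concave:
  assumes sub: "nonneg_submodular f" and "cube y0" "cube y1" "y0 \<le> y1" "0 \<le> l" "l \<le> 1"
  shows "(1 - l) * multilinear_ext f y0 + l * multilinear_ext f y1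
           \<le> multilinear_ext f ((1 - l) *\<^sub>R y0 + l *\<^sub>R y1)"
proof -
  let ?F = "multilinear_ext f"
  define y where "y = (1 - l) *\<^sub>R y0 + l *\<^sub>R y1"
  define d where "d = y1 - y0"
  define G where "G = d \<bullet> grad ?F y"
  have y0y: "y0 \<le> y"
  proof -
    have "y0 $ i \<le> (1 - l) * y0 $ i + l * y1 $ i" for i
      using assms(4,5) by (simp add: less_eq_vec_def algebra_simps mult_left_mono)
    then show ?thesis by (simp add: y_def less_eq_vec_def)
  qed
  have yy1: "y \<le> y1"
  proof -
    have "(1 - l) * y0 $ i + l * y1 $ i \<le> y1 $ i" for i
    proof -
      have "(1 - l) * (y0 $ i - y1 $ i) \<le> 0"
        using assms(4,6) by (intro mult_nonneg_nonpos) (auto simp: less_eq_vec_def)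
      then show ?thesis by (simp add: algebra_simps)
    qed
    then show ?thesis by (simp add: y_def less_eq_vec_def)
  qed
  have cy: "cube y" using y0y yy1 assms(2,3) unfolding cube_def less_eq_vec_def by (meson order_trans)
  have "y - y0 = l *\<^sub>R d" by (simp add: y_def d_def algebra_simps)
  then have 1: "l * G \<le> ?F y - ?F y0"
    using F_segment(2)[OF sub assms(2) cy y0y] by (simp add: G_def)
  have "y1 - y = (1 - l) *\<^sub>R d" by (simp add: y_def d_def algebra_simps)
  then have 2: "?F y1 - ?F y \<le> (1 - l) * G"
    using F_segment(1)[OF sub cy assms(3) yy1] by (simp add: G_def)
  have "(1 - l) * (l * G) \<le> (1 - l) * (?F y - ?F y0)" using 1 assms(6) by (simp add: mult_left_mono)
  moreover have "l * (?F y1 - ?F y) \<le> l * ((1 - l) * G)" using 2 assms(5) by (simp add: mult_left_mono)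
  ultimately have "l * (?F y1 - ?F y) \<le> (1 - l) * (?F y - ?F y0)" by (simp add: algebra_simps)
  then have "(1 - l) * ?F y0 + l * ?F y1 \<le> ?F y" by (simp add: algebra_simps)
  then show ?thesis by (simp only: y_def)
qed

lemma wt_indicator: "wt (indicator_vec S) T = (if T = S then 1 else 0)"
proof (cases "T = S")
  case True
  then show ?thesis by (simp add: wt_def indicator_vec_def)
next
  case False
  then obtain i where "i \<in> T - S \<or> i \<in> S - T" by blast
  then show ?thesis
  proof
    assume i: "i \<in> T - S"
    have "(\<Prod>i\<in>T. indicator_vec S $ i) = 0"
      using i by (intro prod_zero) (auto simp: indicator_vec_def intro!: bexI[of _ i])
    then show ?thesis using False by (simp add: wt_def)
  next
    assume i: "i \<in> S - T"
    have "(\<Prod>i\<in>-T. 1 - indicator_vec S $ i) = 0"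
      using i by (intro prod_zero) (auto simp: indicator_vec_def intro!: bexI[of _ i])
    then show ?thesis using False by (simp add: wt_def)
  qed
qed

lemma F_indicator: "multilinear_ext f (indicator_vec S) = f S"
proof -
  have "(\<Sum>T\<in>UNIV. f T * wt (indicator_vec S) T) = (\<Sum>T\<in>UNIV. if T = S then f S else 0)"
    by (rule sum.cong) (auto simp: wt_indicator)
  then show ?thesis by (simp add: F_EE EE_def)
qed

lemma F_nonneg: "nonneg_submodular f \<Longrightarrow> cube y \<Longrightarrow> 0 \<le> multilinear_ext f y"
  unfolding F_EE EE_def nonneg_submodular_def
  by (intro sum_nonneg mult_nonneg_nonneg wt_nonneg) auto

lemma F_join:
  assumes sub: "nonneg_submodular f" and "cube y" "0 \<le> m" "m \<le> 1" "\<And>i. y $ i \<le> 1 - m"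
  shows "m * f S \<le> multilinear_ext f (\<chi> i. if i \<in> S then 1 else y $ i)"
proof -
  define q where "q = 1 - m"
  define y0 where "y0 = indicator_vec S"
  define y1 where "y1 = (\<chi> i. if i \<in> S then 1 else y $ i / q)"
  have yi: "0 \<le> y $ i" "y $ i \<le> q" for i using assms(2,5) by (auto simp: cube_def q_def)
  have q: "0 \<le> q" "q \<le> 1" using assms(3,4) by (auto simp: q_def)
  have c0: "cube y0" by (simp add: cube_def y0_def indicator_vec_def)
  have c1: "cube y1"
    unfolding cube_def y1_def using yi q by (auto simp: divide_le_eq_1)
  have le: "y0 \<le> y1" unfolding less_eq_vec_def y0_def y1_def indicator_vec_def using yi q by auto
  have eqv: "(1 - q) *\<^sub>R y0 + q *\<^sub>R y1 = (\<chi> i. if i \<in> S then 1 else y $ i)"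
  proof -
    have "(1 - q) * y0 $ i + q * y1 $ i = (if i \<in> S then 1 else y $ i)" for i
    proof (cases "i \<in> S")
      case False
      show ?thesis
      proof (cases "q = 0")
        case True then show ?thesis using yi[of i] False by (simp add: y0_def y1_def indicator_vec_def)
      next
        case qf: False then show ?thesis using False by (simp add: y0_def y1_def indicator_vec_def)
      qed
    qed (simp add: y0_def y1_def indicator_vec_def)
    then show ?thesis by (simp add: vec_eq_iff)
  qed
  have "(1 - q) * multilinear_ext f y0 + q * multilinear_ext f y1 \<le> multilinear_ext f ((1 - q) *\<^sub>R y0 + q *\<^sub>R y1)"
    by (rule F_concave[OF sub c0 c1 le q])
  moreover have "0 \<le> q * multilinear_ext f y1" using F_nonneg[OF sub c1] q by simp
  ultimately show ?thesis using eqv by (simp add: y0_def F_indicator q_def)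
qed

lemma mvt_real:
  fixes f :: "real \<Rightarrow> real"
  assumes "a \<le> b" "{a..b} \<subseteq> S"
    and d: "\<And>t. t \<in> {a..b} \<Longrightarrow> (f has_real_derivative f' t) (at t within S)"
  shows "\<exists>\<xi>\<in>{a..b}. f b - f a = f' \<xi> * (b - a)"
proof -
  have "(f has_derivative (\<lambda>h. f' t * h)) (at t within {a..b})" if "a \<le> t" "t \<le> b" for t
    using DERIV_subset[OF d[of t] assms(2)] that by (simp add: has_field_derivative_def)
  from mvt_very_simple[OF assms(1) this] show ?thesis by (auto simp: mult.commute)
qed

lemma mono_deriv:
  fixes f :: "real \<Rightarrow> real"
  assumes "a \<le> b" "{a..b} \<subseteq> S"
    and d: "\<And>t. t \<in> {a..b} \<Longrightarrow> (f has_real_derivative f' t) (at t within S)"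
    and nn: "\<And>t. t \<in> {a..b} \<Longrightarrow> 0 \<le> f' t"
  shows "f a \<le> f b"
proof -
  obtain \<xi> where "\<xi> \<in> {a..b}" "f b - f a = f' \<xi> * (b - a)" using mvt_real[OF assms(1,2) d] by blast
  moreover have "0 \<le> f' \<xi> * (b - a)" using nn[OF \<open>\<xi> \<in> {a..b}\<close>] assms(1) by simp
  ultimately show ?thesis by simp
qed

lemma vd_inner:
  fixes x :: "real \<Rightarrow> real ^ 'n::finite"
  assumes "(x has_vector_derivative V) (at t within S)"
  shows "((\<lambda>t. c \<bullet> x t) has_real_derivative (c \<bullet> V)) (at t within S)"
proof -
  have xd: "(x has_derivative (\<lambda>h. h *\<^sub>R V)) (at t within S)"
    using assms by (simp add: has_vector_derivative_def)
  have l: "((\<lambda>y. c \<bullet> y) has_derivative (\<lambda>h. c \<bullet> h)) (at (x t))"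
    by (rule bounded_linear_imp_has_derivative[OF bounded_linear_inner_right])
  have "((\<lambda>t. c \<bullet> x t) has_derivative (\<lambda>h. c \<bullet> (h *\<^sub>R V))) (at t within S)"
    by (rule has_derivative_compose[OF xd l])
  then show ?thesis unfolding has_field_derivative_def
    by (rule has_derivative_eq_rhs) (auto simp: fun_eq_iff)
qed

lemma vd_nth:
  fixes x :: "real \<Rightarrow> real ^ 'n::finite"
  assumes "(x has_vector_derivative V) (at t within S)"
  shows "((\<lambda>t. x t $ i) has_real_derivative (V $ i)) (at t within S)"
proof -
  have xd: "(x has_derivative (\<lambda>h. h *\<^sub>R V)) (at t within S)"
    using assms by (simp add: has_vector_derivative_def)
  have l: "((\<lambda>y::real^'n. y $ i) has_derivative (\<lambda>h. h $ i)) (at (x t))"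
    by (rule bounded_linear_imp_has_derivative[OF bounded_linear_vec_nth])
  have "((\<lambda>t. x t $ i) has_derivative (\<lambda>h. (h *\<^sub>R V) $ i)) (at t within S)"
    by (rule has_derivative_compose[OF xd l])
  then show ?thesis unfolding has_field_derivative_def
    by (rule has_derivative_eq_rhs) (auto simp: fun_eq_iff)
qed

lemma coord_bounds:
  fixes u w :: "real \<Rightarrow> real"
  assumes u0: "u 0 = 0" and w: "\<And>t. t \<in> {0..1} \<Longrightarrow> 0 \<le> w t \<and> w t \<le> p" and p: "p \<le> 1"
    and d: "\<And>t. t \<in> {0..1} \<Longrightarrow> (u has_real_derivative (w t * (1 - u t))) (at t within {0..1})"
    and t: "t \<in> {0..1}"
  shows "0 \<le> u t \<and> u t \<le> 1 - exp (- t) \<and> u t \<le> p * t"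
proof -
  define h where "h s = (1 - u s)\<^sup>2 * exp (2 * s)" for s
  define h' where "h' s = 2 * (1 - u s)\<^sup>2 * exp (2 * s) * (1 - w s)" for s
  have hd: "(h has_real_derivative h' s) (at s within {0..1})" if "s \<in> {0..1}" for s
    unfolding h_def h'_def
    by (rule derivative_eq_intros d[OF that] refl | simp)+ (simp add: power2_eq_square algebra_simps)
  have hmono: "h 0 \<le> h s" if s1: "s \<in> {0..1}" for s
  proof (rule mono_deriv[of 0 s "{0..1}" h h'])
    show "(h has_real_derivative h' t) (at t within {0..1})" if "t \<in> {0..s}" for t
      using that s1 by (intro hd) auto
    show "0 \<le> h' t" if "t \<in> {0..s}" for t
    proof -
      have "w t \<le> 1" using w[of t] that s1 p by auto
      then show ?thesis by (simp add: h'_def)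
    qed
  qed (use s1 in auto)
  have h0: "h 0 = 1" by (simp add: h_def u0)
  have sq: "exp (- s) ^ 2 \<le> (1 - u s)\<^sup>2" if "s \<in> {0..1}" for s
  proof -
    have "1 \<le> (1 - u s)\<^sup>2 * exp (2 * s)" using hmono[OF that] h0 by (simp add: h_def)
    then have "exp (- (2 * s)) \<le> (1 - u s)\<^sup>2"
      by (simp add: exp_minus field_simps)
    moreover have "exp (- s) ^ 2 = exp (- (2 * s))" by (simp add: exp_of_nat_mult[symmetric] flip: exp_add)
    ultimately show ?thesis by simp
  qed
  have cont: "continuous_on {0..1} u"
  proof (rule differentiable_imp_continuous_on)
    show "u differentiable_on {0..1}"
      unfolding differentiable_on_def differentiable_def
      using d unfolding has_field_derivative_def by blast
  qed
  have lt1: "u s < 1" if "s \<in> {0..1}" for s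
  proof (rule ccontr)
    assume "\<not> u s < 1"
    then have "u 0 \<le> 1" "1 \<le> u s" "0 \<le> s" using u0 that by auto
    moreover have "continuous_on {0..s} u" using cont that by (auto intro: continuous_on_subset)
    ultimately obtain r where r: "0 \<le> r" "r \<le> s" "u r = 1" using IVT'[of u 0 1 s] by blast
    have "exp (- r) ^ 2 \<le> (1 - u r)\<^sup>2" using sq[of r] r that by auto
    then show False using r by simp
  qed
  have e: "exp (- s) \<le> 1 - u s" if "s \<in> {0..1}" for s
  proof -
    have "0 \<le> 1 - u s" using lt1[OF that] by simp
    then show ?thesis using power2_le_imp_le[OF sq[OF that]] by blast
  qed
  have nn: "0 \<le> u s" if "s \<in> {0..1}" for s
  proof -
    have "u 0 \<le> u s"
    proof (rule mono_deriv[of 0 s "{0..1}" u "\<lambda>s. w s * (1 - u s)"])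
      show "(u has_real_derivative w r * (1 - u r)) (at r within {0..1})" if "r \<in> {0..s}" for r
        using that \<open>s \<in> {0..1}\<close> by (intro d) auto
      show "0 \<le> w r * (1 - u r)" if "r \<in> {0..s}" for r
      proof -
        have r: "r \<in> {0..1}" using that \<open>s \<in> {0..1}\<close> by auto
        show ?thesis using w[OF r] lt1[OF r] by simp
      qed
    qed (use that in auto)
    then show ?thesis using u0 by simp
  qed
  have le_p: "u t - p * t \<le> u 0 - p * 0"
  proof -
    have "(\<lambda>s. p * s - u s) 0 \<le> (\<lambda>s. p * s - u s) t"
    proof (rule mono_deriv[of 0 t "{0..1}" _ "\<lambda>s. p - w s * (1 - u s)"])
      show "((\<lambda>s. p * s - u s) has_real_derivative p - w s * (1 - u s)) (at s within {0..1})"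
        if "s \<in> {0..t}" for s
      proof -
        have "s \<in> {0..1}" using that t by auto
        from d[OF this] show ?thesis by (auto intro!: derivative_eq_intros)
      qed
      show "0 \<le> p - w s * (1 - u s)" if "s \<in> {0..t}" for s
      proof -
        have s: "s \<in> {0..1}" using that t by auto
        have "w s * (1 - u s) \<le> w s * 1" using w[OF s] nn[OF s] by (intro mult_left_mono) auto
        then show ?thesis using w[OF s] by simp
      qed
    qed (use t in auto)
    then show ?thesis by simp
  qed
  show ?thesis using nn[OF t] e[OF t] le_p u0 by simp
qed

lemma hadamard_nth [simp]: "(u \<circ>\<^sub>v w) $ i = u $ i * w $ i"
  by (simp add: hadamard_def)

lemma key_ineq:
  fixes y :: "real ^ 'n::finite"
  assumes sub: "nonneg_submodular f" and cy: "cube y"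
    and a: "\<And>S. 0 \<le> a S" "(\<Sum>S\<in>UNIV. a S) = 1"
    and z: "z = (\<Sum>S\<in>UNIV. a S *\<^sub>R indicator_vec S)"
    and m: "0 \<le> m" "m \<le> 1" "\<And>i. y $ i \<le> 1 - m"
  shows "m * (\<Sum>S\<in>UNIV. a S * f S) - multilinear_ext f y
           \<le> (z \<circ>\<^sub>v (1 - y)) \<bullet> grad (multilinear_ext f) y"
proof -
  let ?F = "multilinear_ext f"
  let ?G = "grad ?F y"
  have lin: "(z \<circ>\<^sub>v (1 - y)) \<bullet> ?G = (\<Sum>S\<in>UNIV. a S * ((indicator_vec S \<circ>\<^sub>v (1 - y)) \<bullet> ?G))"
    unfolding z inner_vec_def
    by (simp add: sum_distrib_left sum_distrib_right mult_ac) (rule sum.swap)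
  have each: "m * f S - ?F y \<le> (indicator_vec S \<circ>\<^sub>v (1 - y)) \<bullet> ?G" for S
  proof -
    define j where "j = (\<chi> i. if i \<in> S then 1 else y $ i)"
    have cj: "cube j" using cy by (simp add: cube_def j_def)
    have yj: "y \<le> j" using cy by (simp add: cube_def j_def less_eq_vec_def)
    have dj: "j - y = indicator_vec S \<circ>\<^sub>v (1 - y)"
      by (simp add: vec_eq_iff j_def indicator_vec_def)
    have "?F j - ?F y \<le> (indicator_vec S \<circ>\<^sub>v (1 - y)) \<bullet> ?G"
      using F_segment(1)[OF sub cy cj yj] dj by simp
    moreover have "m * f S \<le> ?F j" unfolding j_def by (rule F_join[OF sub cy m])
    ultimately show ?thesis by simp
  qed
  have "m * (\<Sum>S\<in>UNIV. a S * f S) - ?F y = (\<Sum>S\<in>UNIV. a S * (m * f S - ?F y))"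
    using a(2) by (simp add: sum_distrib_left right_diff_distrib sum_subtractf mult_ac flip: sum_distrib_right)
  also have "\<dots> \<le> (\<Sum>S\<in>UNIV. a S * ((indicator_vec S \<circ>\<^sub>v (1 - y)) \<bullet> ?G))"
    using a(1) each by (intro sum_mono mult_left_mono) auto
  finally show ?thesis using lin by simp
qed

lemma EE_one: "EE y (\<lambda>_. 1) = 1"
proof -
  have "(\<Prod>i\<in>(UNIV::'a set). y $ i + (1 - y $ i)) = (\<Sum>X\<in>Pow UNIV. (\<Prod>i\<in>X. y $ i) * (\<Prod>i\<in>UNIV - X. 1 - y $ i))"
    by (rule prod_add) simp
  then show ?thesis by (simp add: EE_def wt_def Compl_eq_Diff_UNIV)
qed

lemma EE_zero: "EE y (\<lambda>_. 0) = 0" by (simp add: EE_def)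

lemma EE_marg: "EE y (\<lambda>S. if i \<in> S then 1 else 0) = y $ i"
proof -
  have "EE y (\<lambda>S. if i \<in> S then 1 else 0) = y $ i * EE (upd y i 1) (\<lambda>S. if i \<in> S then 1 else 0)
      + (1 - y $ i) * EE (upd y i 0) (\<lambda>S. if i \<in> S then 1 else 0)"
    by (rule EE_aff)
  also have "\<dots> = y $ i" by (simp add: EE_ins EE_del EE_one EE_zero)
  finally show ?thesis .
qed

lemma feasible_nonempty:
  fixes z :: "real ^ 'n::finite"
  assumes "cube z"
  shows "(\<forall>S. wt z S \<ge> 0) \<and> (\<Sum>S\<in>UNIV. wt z S) = 1 \<and> (\<Sum>S\<in>UNIV. wt z S *\<^sub>R indicator_vec S) = z"
proof (intro conjI allI)
  show "wt z S \<ge> 0" for S using wt_nonneg[OF assms] .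
  show "(\<Sum>S\<in>UNIV. wt z S) = 1" using EE_one[of z] by (simp add: EE_def)
  show "(\<Sum>S\<in>UNIV. wt z S *\<^sub>R indicator_vec S) = z"
  proof (subst vec_eq_iff, intro allI)
    fix i
    show "(\<Sum>S\<in>UNIV. wt z S *\<^sub>R indicator_vec S) $ i = z $ i"
      using EE_marg[of z i] by (simp add: EE_def indicator_vec_def mult.commute)
  qed
qed

lemma sup_bound:
  fixes A :: "'a \<Rightarrow> real set"
  assumes "P \<noteq> {}" "\<And>z. z \<in> P \<Longrightarrow> A z \<noteq> {}" "0 \<le> c" "0 \<le> K"
    and b: "\<And>z V. z \<in> P \<Longrightarrow> V \<in> A z \<Longrightarrow> c * V \<le> K"
  shows "c * (SUP z\<in>P. Sup (A z)) \<le> K"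
proof (cases "c = 0")
  case True then show ?thesis using assms by simp
next
  case False
  then have c: "0 < c" using assms by simp
  have "Sup (A z) \<le> K / c" if "z \<in> P" for z
    using assms(2)[OF that] b[OF that] c by (intro cSup_least) (auto simp: field_simps)
  then have "(SUP z\<in>P. Sup (A z)) \<le> K / c" using assms(1) by (intro cSUP_least) auto
  then show ?thesis using c by (simp add: field_simps)
qed

lemma scaled_member:
  fixes x v :: "real \<Rightarrow> real ^ 'n::finite"
  assumes P: "polytope P" "down_closed P" "in_unit_cube P"
    and x0: "x 0 = 0" and vP: "\<And>t. t \<in> {0..1} \<Longrightarrow> v t \<in> P"
    and xd: "\<And>t. t \<in> {0..1} \<Longrightarrow> (x has_vector_derivative (v t \<circ>\<^sub>v (1 - x t))) (at t within {0..1})"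
    and cx: "\<And>t. t \<in> {0..1} \<Longrightarrow> cube (x t)"
    and b: "b \<in> {0..1}"
  shows "x b \<in> (\<lambda>z. b *\<^sub>R z) ` P"
proof (cases "b = 0")
  case True
  have "v 0 \<in> P" using vP by simp
  then show ?thesis using True x0 by (intro image_eqI[of _ _ "v 0"]) auto
next
  case False
  then have bp: "0 < b" using b by simp
  define y where "y = (1 / b) *\<^sub>R x b"
  have ynn: "0 \<le> y $ i" for i using cx[OF b] bp by (simp add: y_def cube_def)
  have Pnn: "0 \<le> z $ i" "z $ i \<le> 1" if "z \<in> P" for z i
    using P(3) that by (auto simp: in_unit_cube_def)
  have wP: "v t \<circ>\<^sub>v (1 - x t) \<in> P" if t: "t \<in> {0..1}" for t
  proof -
    have "0 \<le> v t $ i * (1 - x t $ i) \<and> v t $ i * (1 - x t $ i) \<le> v t $ i" for i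
    proof -
      have "0 \<le> v t $ i" "0 \<le> x t $ i" "x t $ i \<le> 1"
        using Pnn[OF vP[OF t]] cx[OF t] by (auto simp: cube_def)
      moreover have "v t $ i * x t $ i \<le> v t $ i"
        using calculation mult_left_mono[of "x t $ i" 1 "v t $ i"] by simp
      ultimately show ?thesis by (simp add: algebra_simps)
    qed
    then have "0 \<le> v t \<circ>\<^sub>v (1 - x t)" "v t \<circ>\<^sub>v (1 - x t) \<le> v t"
      by (auto simp: less_eq_vec_def)
    then show ?thesis using P(2) vP[OF t] unfolding down_closed_def by blast
  qed
  have "y \<in> P"
  proof (rule ccontr)
    assume yP: "y \<notin> P"
    obtain a \<beta> where ay: "a \<bullet> y < \<beta>" and aP: "\<forall>z\<in>P. \<beta> < a \<bullet> z"
      using separating_hyperplane_closed_point[OF polytope_imp_convex[OF P(1)] polytope_imp_closed[OF P(1)] yP]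
      by blast
    define c where "c = (\<chi> i. max 0 (- a $ i))"
    have cP: "c \<bullet> z < - \<beta>" if z: "z \<in> P" for z
    proof -
      define z' where "z' = (\<chi> i. if a $ i \<le> 0 then z $ i else 0)"
      have "0 \<le> z'" "z' \<le> z" using Pnn[OF z] by (auto simp: less_eq_vec_def z'_def)
      then have "z' \<in> P" using P(2) z unfolding down_closed_def by blast
      then have "\<beta> < a \<bullet> z'" using aP by blast
      moreover have "c \<bullet> z = - (a \<bullet> z')"
        unfolding inner_vec_def c_def z'_def
        by (simp add: sum_negf[symmetric]) (rule sum.cong, auto simp: max_def)
      ultimately show ?thesis by simp
    qed
    have cy: "- (a \<bullet> y) \<le> c \<bullet> y"
      unfolding inner_vec_def c_def
      by (simp add: sum_negf[symmetric]) (rule sum_mono, use ynn in \<open>auto intro: mult_right_mono simp: max_def\<close>)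
    have b01: "{0..b} \<subseteq> {0..1}" using b by auto
    have dd: "((\<lambda>t. c \<bullet> x t) has_real_derivative c \<bullet> (v t \<circ>\<^sub>v (1 - x t))) (at t within {0..1})"
      if "t \<in> {0..b}" for t
      using that b01 by (intro vd_inner xd) auto
    obtain \<xi> where xi: "\<xi> \<in> {0..b}"
      and eq: "c \<bullet> x b - c \<bullet> x 0 = (c \<bullet> (v \<xi> \<circ>\<^sub>v (1 - x \<xi>))) * (b - 0)"
      using mvt_real[of 0 b "{0..1}" "\<lambda>t. c \<bullet> x t" "\<lambda>t. c \<bullet> (v t \<circ>\<^sub>v (1 - x t))", OF _ b01 dd] bp
      by auto
    have "c \<bullet> (v \<xi> \<circ>\<^sub>v (1 - x \<xi>)) < - \<beta>" using cP wP xi b01 by blast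
    then have "c \<bullet> (v \<xi> \<circ>\<^sub>v (1 - x \<xi>)) * b < (- \<beta>) * b" using bp by (intro mult_strict_right_mono)
    then have "c \<bullet> x b < - \<beta> * b" using eq bp x0 by simp
    then have "c \<bullet> y < - \<beta>" using bp by (simp add: y_def field_simps)
    then show False using cy ay by simp
  qed
  moreover have "x b = b *\<^sub>R y" using bp by (simp add: y_def)
  ultimately show ?thesis by blast
qed

theorem theorem3:
  fixes f :: "'n::finite set \<Rightarrow> real"
    and P :: "(real ^ 'n) set"
    and p :: real
    and x v :: "real \<Rightarrow> real ^ 'n"
  assumes "0 \<le> p" "p < 1"
    and "nonneg_submodular f"
    and "polytope P" "in_unit_cube P" "down_closed P"
    and "\<forall>z\<in>P. \<forall>i. z $ i \<le> p"
    and "mcg_trajectory (multilinear_ext f) P x v"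
  shows "\<forall>b\<in>{0..1}.
     x b \<in> (\<lambda>z. b *\<^sub>R z) ` P \<and>
     (b \<le> ln (1 / (1 - p)) \<longrightarrow>
        multilinear_ext f (x b) \<ge> b * exp (- b) * (SUP z\<in>P. concave_closure f z)) \<and>
     (ln (1 / (1 - p)) \<le> b \<longrightarrow>
        multilinear_ext f (x b) \<ge> (1 - p - exp (- b) * (1 + ln (1 - p))) * (SUP z\<in>P. concave_closure f z))"
proof -
  let ?F = "multilinear_ext f"
  note sub = assms(3)
  have x0: "x 0 = 0" and vP: "\<And>t. t \<in> {0..1} \<Longrightarrow> v t \<in> P"
    and amax: "\<And>t w. t \<in> {0..1} \<Longrightarrow> w \<in> P \<Longrightarrow>
        (w \<circ>\<^sub>v (1 - x t)) \<bullet> grad ?F (x t) \<le> (v t \<circ>\<^sub>v (1 - x t)) \<bullet> grad ?F (x t)"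
    and xd: "\<And>t. t \<in> {0..1} \<Longrightarrow> (x has_vector_derivative (v t \<circ>\<^sub>v (1 - x t))) (at t within {0..1})"
    using assms(8) unfolding mcg_trajectory_def by auto
  have Pc: "0 \<le> z $ i \<and> z $ i \<le> 1" if "z \<in> P" for z i
    using assms(5) that by (auto simp: in_unit_cube_def)
  have Pp: "z $ i \<le> p" if "z \<in> P" for z i using assms(7) that by auto
  have Pne: "P \<noteq> {}" using vP[of 0] by auto
  have cb: "0 \<le> x t $ i \<and> x t $ i \<le> 1 - exp (- t) \<and> x t $ i \<le> p * t" if t: "t \<in> {0..1}" for t i
  proof (rule coord_bounds[where u = "\<lambda>t. x t $ i" and w = "\<lambda>t. v t $ i" and p = p])
    show "x 0 $ i = 0" using x0 by simp
    show "0 \<le> v s $ i \<and> v s $ i \<le> p" if "s \<in> {0..1}" for s using Pc[OF vP[OF that]] Pp[OF vP[OF that]] by auto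
    show "p \<le> 1" using assms(2) by simp
    show "((\<lambda>t. x t $ i) has_real_derivative v s $ i * (1 - x s $ i)) (at s within {0..1})"
      if "s \<in> {0..1}" for s
      using vd_nth[OF xd[OF that], of i] by simp
  qed (rule t)
  have cx: "cube (x t)" if "t \<in> {0..1}" for t
  proof -
    have "1 - exp (- t) \<le> 1" by simp
    then show ?thesis using cb[OF that] unfolding cube_def by (meson order_trans)
  qed
  define \<Phi> where "\<Phi> t = (v t \<circ>\<^sub>v (1 - x t)) \<bullet> grad ?F (x t)" for t
  have phid: "((\<lambda>t. ?F (x t)) has_real_derivative \<Phi> t) (at t within {0..1})" if t: "t \<in> {0..1}" for t
  proof -
    have xd': "(x has_derivative (\<lambda>h. h *\<^sub>R (v t \<circ>\<^sub>v (1 - x t)))) (at t within {0..1})"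
      using xd[OF t] by (simp add: has_vector_derivative_def)
    have "((\<lambda>t. ?F (x t)) has_derivative (\<lambda>h. (h *\<^sub>R (v t \<circ>\<^sub>v (1 - x t))) \<bullet> grad ?F (x t))) (at t within {0..1})"
      by (rule has_derivative_compose[OF xd' F_has_derivative])
    then show ?thesis unfolding has_field_derivative_def \<Phi>_def
      by (rule has_derivative_eq_rhs) (auto simp: fun_eq_iff)
  qed
  have F0: "?F (x 0) = 0"
  proof -
    have "indicator_vec {} = (0 :: real ^ 'n)" by (simp add: indicator_vec_def vec_eq_iff)
    then have "?F 0 = f {}" using F_indicator[of f "{}"] by simp
    then show ?thesis using sub x0 by (simp add: nonneg_submodular_def)
  qed
  define t0 where "t0 = ln (1 / (1 - p))"
  have t0: "t0 = - ln (1 - p)" using assms(2) by (simp add: t0_def ln_div)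
  have t0nn: "0 \<le> t0" using assms(1,2) by (simp add: t0)
  have et0: "exp t0 = 1 / (1 - p)" using assms(2) by (simp add: t0_def)
  have bounds: "b * exp (- b) * V \<le> ?F (x b) \<and>
      (t0 \<le> b \<longrightarrow> (1 - p - exp (- b) * (1 + ln (1 - p))) * V \<le> ?F (x b))"
    if b: "b \<in> {0..1}" and z: "z \<in> P" and a: "\<forall>S. 0 \<le> a S" "(\<Sum>S\<in>UNIV. a S) = 1"
      "(\<Sum>S\<in>UNIV. a S *\<^sub>R indicator_vec S) = z" and V: "V = (\<Sum>S\<in>UNIV. a S * f S)" for b z a V
  proof -
    have low: "m * V - ?F (x t) \<le> \<Phi> t"
      if t: "t \<in> {0..1}" and m: "0 \<le> m" "m \<le> 1" "\<And>i. x t $ i \<le> 1 - m" for t m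
    proof -
      have "m * V - ?F (x t) \<le> (z \<circ>\<^sub>v (1 - x t)) \<bullet> grad ?F (x t)"
        unfolding V by (rule key_ineq[OF sub cx[OF t]]) (use a m in auto)
      also have "\<dots> \<le> \<Phi> t" unfolding \<Phi>_def by (rule amax[OF t z])
      finally show ?thesis .
    qed
    have low1: "exp (- t) * V - ?F (x t) \<le> \<Phi> t" if t: "t \<in> {0..1}" for t
      using t cb[OF t] by (intro low) auto
    have low2: "(1 - p) * V - ?F (x t) \<le> \<Phi> t" if t: "t \<in> {0..1}" for t
    proof (rule low[OF t])
      show "x t $ i \<le> 1 - (1 - p)" for i
      proof -
        have "p * t \<le> p * 1" using t assms(1) by (intro mult_left_mono) auto
        then show ?thesis using cb[OF t, of i] by simp
      qed
    qed (use assms(1,2) in auto)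
    have ph1: "s * V \<le> exp s * ?F (x s)" if s: "s \<in> {0..1}" for s
    proof -
      have "(\<lambda>t. exp t * ?F (x t) - t * V) 0 \<le> (\<lambda>t. exp t * ?F (x t) - t * V) s"
      proof (rule mono_deriv[of 0 s "{0..1}" _ "\<lambda>t. exp t * ?F (x t) + exp t * \<Phi> t - V"])
        show "((\<lambda>t. exp t * ?F (x t) - t * V) has_real_derivative exp t * ?F (x t) + exp t * \<Phi> t - V)
            (at t within {0..1})" if "t \<in> {0..s}" for t
        proof -
          have "t \<in> {0..1}" using that s by auto
          from phid[OF this] show ?thesis by (auto intro!: derivative_eq_intros)
        qed
        show "0 \<le> exp t * ?F (x t) + exp t * \<Phi> t - V" if "t \<in> {0..s}" for t
        proof -
          have t: "t \<in> {0..1}" using that s by auto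
          have "exp t * (exp (- t) * V - ?F (x t)) \<le> exp t * \<Phi> t"
            using low1[OF t] by (intro mult_left_mono) auto
          then show ?thesis by (simp add: algebra_simps exp_minus)
        qed
      qed (use s in auto)
      then show ?thesis using F0 by simp
    qed
    have B1: "b * exp (- b) * V \<le> ?F (x b)"
    proof -
      have "exp (- b) * (b * V) \<le> exp (- b) * (exp b * ?F (x b))"
        using ph1[OF b] by (intro mult_left_mono) auto
      then show ?thesis by (simp add: exp_minus field_simps)
    qed
    have B2: "(1 - p - exp (- b) * (1 + ln (1 - p))) * V \<le> ?F (x b)" if tb: "t0 \<le> b"
    proof -
      have t01: "t0 \<in> {0..1}" using tb b t0nn by auto
      have "(\<lambda>t. exp t * ?F (x t) - (1 - p) * exp t * V) t0 \<le> (\<lambda>t. exp t * ?F (x t) - (1 - p) * exp t * V) b"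
      proof (rule mono_deriv[of t0 b "{0..1}" _ "\<lambda>t. exp t * ?F (x t) + exp t * \<Phi> t - (1 - p) * exp t * V"])
        show "((\<lambda>t. exp t * ?F (x t) - (1 - p) * exp t * V) has_real_derivative
            exp t * ?F (x t) + exp t * \<Phi> t - (1 - p) * exp t * V) (at t within {0..1})"
          if "t \<in> {t0..b}" for t
        proof -
          have "t \<in> {0..1}" using that b t0nn by auto
          from phid[OF this] show ?thesis by (auto intro!: derivative_eq_intros simp: algebra_simps)
        qed
        show "0 \<le> exp t * ?F (x t) + exp t * \<Phi> t - (1 - p) * exp t * V" if "t \<in> {t0..b}" for t
        proof -
          have t: "t \<in> {0..1}" using that b t0nn by auto
          have "exp t * ((1 - p) * V - ?F (x t)) \<le> exp t * \<Phi> t"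
            using low2[OF t] by (intro mult_left_mono) auto
          then show ?thesis by (simp add: algebra_simps)
        qed
      qed (use tb b t0nn in auto)
      then have "exp t0 * ?F (x t0) - (1 - p) * exp t0 * V \<le> exp b * ?F (x b) - (1 - p) * exp b * V"
        by simp
      moreover have "exp t0 * ?F (x t0) - (1 - p) * exp t0 * V = exp t0 * ?F (x t0) - V"
        using et0 assms(2) by simp
      moreover have "t0 * V \<le> exp t0 * ?F (x t0)" by (rule ph1[OF t01])
      ultimately have "(t0 - 1) * V + (1 - p) * exp b * V \<le> exp b * ?F (x b)"
        by (simp add: algebra_simps)
      then have "exp (- b) * ((t0 - 1) * V + (1 - p) * exp b * V) \<le> exp (- b) * (exp b * ?F (x b))"
        by (intro mult_left_mono) auto
      then show ?thesis by (simp add: t0 exp_minus field_simps)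
    qed
    show ?thesis using B1 B2 by blast
  qed
  show ?thesis
  proof (intro ballI conjI impI)
    fix b :: real
    assume b: "b \<in> {0..1}"
    show "x b \<in> (\<lambda>z. b *\<^sub>R z) ` P"
      by (rule scaled_member[OF assms(4,6,5) x0 vP xd cx b])
    define A where "A z = {(\<Sum>S\<in>UNIV. a S * f S) | a. (\<forall>S. a S \<ge> 0) \<and> (\<Sum>S\<in>UNIV. a S) = 1 \<and>
        (\<Sum>S\<in>UNIV. a S *\<^sub>R indicator_vec S) = z}" for z
    have cc: "concave_closure f z = Sup (A z)" for z by (simp add: concave_closure_def A_def)
    have Ane: "A z \<noteq> {}" if "z \<in> P" for z
    proof -
      have "cube z" using Pc[OF that] by (simp add: cube_def)
      from feasible_nonempty[OF this] show ?thesis unfolding A_def by blast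
    qed
    have Fnn: "0 \<le> ?F (x b)" by (rule F_nonneg[OF sub cx[OF b]])
    have ebb: "exp (- b) \<le> 1 - p" if "t0 \<le> b"
    proof -
      have "exp (- b) \<le> exp (- t0)" using that by simp
      also have "\<dots> = 1 - p" using et0 by (simp add: exp_minus)
      finally show ?thesis .
    qed
    show "b * exp (- b) * (SUP z\<in>P. concave_closure f z) \<le> ?F (x b)"
      if "b \<le> ln (1 / (1 - p))"
      unfolding cc
    proof (rule sup_bound[OF Pne Ane _ Fnn])
      show "0 \<le> b * exp (- b)" using b by simp
      show "b * exp (- b) * V \<le> ?F (x b)" if "z \<in> P" "V \<in> A z" for z V
        using that bounds[OF b] unfolding A_def by blast
    qed
    show "(1 - p - exp (- b) * (1 + ln (1 - p))) * (SUP z\<in>P. concave_closure f z) \<le> ?F (x b)"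
      if tb: "ln (1 / (1 - p)) \<le> b"
      unfolding cc
    proof (rule sup_bound[OF Pne Ane _ Fnn])
      have tb': "t0 \<le> b" using tb by (simp add: t0_def)
      have "exp (- b) * (1 + ln (1 - p)) \<le> 1 - p"
      proof (cases "0 \<le> 1 + ln (1 - p)")
        case True
        have "exp (- b) * (1 + ln (1 - p)) \<le> (1 - p) * (1 + ln (1 - p))"
          using ebb[OF tb'] True by (intro mult_right_mono) auto
        also have "\<dots> \<le> 1 - p"
        proof -
          have "ln (1 - p) \<le> 0" using assms(1,2) by simp
          then have "(1 - p) * ln (1 - p) \<le> 0" using assms(2) by (intro mult_nonneg_nonpos) auto
          then show ?thesis by (simp add: algebra_simps)
        qed
        finally show ?thesis .
      next
        case False
        then have "exp (- b) * (1 + ln (1 - p)) \<le> 0" by (simp add: mult_nonneg_nonpos)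
        then show ?thesis using assms(2) by simp
      qed
      then show "0 \<le> 1 - p - exp (- b) * (1 + ln (1 - p))" by simp
      show "(1 - p - exp (- b) * (1 + ln (1 - p))) * V \<le> ?F (x b)" if "z \<in> P" "V \<in> A z" for z V
        using that bounds[OF b] tb' unfolding A_def by blast
    qed
  qed
qed

end
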